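(* Let $n\ge 1$, let $A\in\mathbb{R}^{n\times n}$ be symmetric positive definite with rows $a_1^\top,\dots,a_n^\top$, let $b\in\mathbb{R}^n$, let $L=\lambda_{\max}(A)$ and let $\gamma>0$. For $x\in\mathbb{R}^n$ form the $n+2$ tokens (row vectors in $\mathbb{R}^{2n+1}$) $$\tilde a_i^\top=[a_i^\top\ \ e_i^\top\ \ 0]\ (i=1,\dots,n),\qquad \tilde b^\top=[0_n^\top\ \ b^\top\ \ 1],\qquad \tilde x^\top=[x^\top\ \ 0_n^\top\ \ 1],$$ where $e_i$ are the standard basis vectors of $\mathbb{R}^n$. Then there exist fixed matrices $W_Q,W_K\in\mathbb{R}^{(2n+1)\times(n+1)}$ and $W_V\in\mathbb{R}^{(2n+1)\times n}$, not depending on $A$, $b$ or $x$, such that the output of the single linear-attention head with these weights, evaluated at the $x$-token, equals $Ax+b$. Consequently, applying this head followed by a residual connection on the $x$-token with post-map $-\gamma I_n$ maps $x_k$ to $x_{k+1}=x_k-\gamma(Ax_k+b)$. Moreover, if $0<\gamma<2/L$, then for any $x_0\in\mathbb{R}^n$ the iterates $x_k$ produced by repeating this step converge linearly to $x^\star=-A^{-1}b$, the minimizer of $\tfrac12 x^\top Ax+b^\top x$.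
   Context: A single linear-attention head with weights $W_Q,W_K,W_V$ acts on a sequence of tokens $z_1,\dots,z_N$ (row vectors) by producing at token $j$ the output $o_j=\sum_{i=1}^N\langle z_jW_Q,\,z_iW_K\rangle\, z_iW_V$ (no softmax). A residual connection with post-map $P$ on a token $z$ whose first $n$ coordinates hold $x$ replaces $x$ by $x+P\,o$ where $o$ is the head output at that token. *)

theory Defs
  imports Complex_Main "Jordan_Normal_Form.Matrix" "Jordan_Normal_Form.Char_Poly"
begin

definition spd_mat :: "nat \<Rightarrow> real mat \<Rightarrow> bool" where
  "spd_mat n A \<longleftrightarrow> A \<in> carrier_mat n n \<and> transpose_mat A = A \<and>
     (\<forall>v \<in> carrier_vec n. v \<noteq> 0\<^sub>v n \<longrightarrow> v \<bullet> (A *\<^sub>v v) > 0)"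

definition lambda_max :: "real mat \<Rightarrow> real" where
  "lambda_max A = Max {l. eigenvalue A l}"

definition mat_inv :: "real mat \<Rightarrow> real mat" where
  "mat_inv A = (SOME B. inverts_mat A B \<and> inverts_mat B A)"

definition vnorm :: "real vec \<Rightarrow> real" where
  "vnorm v = sqrt (v \<bullet> v)"

definition rmul :: "real vec \<Rightarrow> real mat \<Rightarrow> real vec" where
  "rmul z W = transpose_mat W *\<^sub>v z"

definition lin_attn :: "real mat \<Rightarrow> real mat \<Rightarrow> real mat \<Rightarrow> (nat \<Rightarrow> real vec) \<Rightarrow> nat \<Rightarrow> nat \<Rightarrow> real vec" where
  "lin_attn WQ WK WV z N j =
     vec (dim_col WV) (\<lambda>k. \<Sum>i<N. (rmul (z j) WQ \<bullet> rmul (z i) WK) * (rmul (z i) WV $ k))"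

definition residual :: "nat \<Rightarrow> real mat \<Rightarrow> real vec \<Rightarrow> real vec \<Rightarrow> real vec" where
  "residual n P out z = vec (dim_vec z) (\<lambda>i. if i < n then z $ i + (P *\<^sub>v out) $ i else z $ i)"

definition tok_a :: "nat \<Rightarrow> real mat \<Rightarrow> nat \<Rightarrow> real vec" where
  "tok_a n A i = row A i @\<^sub>v unit_vec n i @\<^sub>v 0\<^sub>v 1"

definition tok_b :: "nat \<Rightarrow> real vec \<Rightarrow> real vec" where
  "tok_b n b = 0\<^sub>v n @\<^sub>v b @\<^sub>v vec 1 (\<lambda>_. 1)"

definition tok_x :: "nat \<Rightarrow> real vec \<Rightarrow> real vec" where
  "tok_x n x = x @\<^sub>v 0\<^sub>v n @\<^sub>v vec 1 (\<lambda>_. 1)"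

definition tokens :: "nat \<Rightarrow> real mat \<Rightarrow> real vec \<Rightarrow> real vec \<Rightarrow> nat \<Rightarrow> real vec" where
  "tokens n A b x j = (if j < n then tok_a n A j else if j = n then tok_b n b else tok_x n x)"

definition head_x :: "nat \<Rightarrow> real mat \<Rightarrow> real mat \<Rightarrow> real mat \<Rightarrow> real mat \<Rightarrow> real vec \<Rightarrow> real vec \<Rightarrow> real vec" where
  "head_x n WQ WK WV A b x = lin_attn WQ WK WV (tokens n A b x) (n + 2) (n + 1)"

definition layer_step :: "nat \<Rightarrow> real mat \<Rightarrow> real mat \<Rightarrow> real mat \<Rightarrow> real \<Rightarrow> real mat \<Rightarrow> real vec \<Rightarrow> real vec \<Rightarrow> real vec" where
  "layer_step n WQ WK WV \<gamma> A b x =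
     vec_first (residual n ((-\<gamma>) \<cdot>\<^sub>m 1\<^sub>m n) (head_x n WQ WK WV A b x) (tok_x n x)) n"

definition layer_iter :: "nat \<Rightarrow> real mat \<Rightarrow> real mat \<Rightarrow> real mat \<Rightarrow> real \<Rightarrow> real mat \<Rightarrow> real vec \<Rightarrow> real vec \<Rightarrow> nat \<Rightarrow> real vec" where
  "layer_iter n WQ WK WV \<gamma> A b x0 k = (layer_step n WQ WK WV \<gamma> A b ^^ k) x0"

definition quad_obj :: "real mat \<Rightarrow> real vec \<Rightarrow> real vec \<Rightarrow> real" where
  "quad_obj A b y = (1/2) * (y \<bullet> (A *\<^sub>v y)) + b \<bullet> y"

end

theory Submission
  imports Defs "HOL-Analysis.Function_Topology" "Jordan_Normal_Form.Spectral_Radius"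
begin


lemma cpt: "compact (PiE (UNIV::nat set) (\<lambda>_. {-1..1::real}))"
proof -
  have "compactin (product_topology (\<lambda>_. euclideanreal) UNIV) (PiE (UNIV::nat set) (\<lambda>_. {-1..1::real}))"
    by (simp add: compactin_PiE)
  then show ?thesis by (simp add: euclidean_product_topology)
qed

definition qf :: "nat \<Rightarrow> real mat \<Rightarrow> (nat \<Rightarrow> real) \<Rightarrow> real" where
  "qf n A f = (\<Sum>i<n. f i * (\<Sum>j<n. A $$ (i,j) * f j))"

lemma qf_vec: assumes "A \<in> carrier_mat n n" "v \<in> carrier_vec n"
  and "\<And>i. i < n \<Longrightarrow> f i = v $ i"
  shows "v \<bullet> (A *\<^sub>v v) = qf n A f"
proof -
  have r: "row A i \<bullet> v = (\<Sum>j<n. A $$ (i,j) * v $ j)" if "i < n" for i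
    using assms that unfolding scalar_prod_def by (auto simp: atLeast0LessThan intro!: sum.cong)
  show ?thesis unfolding qf_def scalar_prod_def using assms r
    by (auto simp: atLeast0LessThan intro!: sum.cong)
qed

lemma sq_vec: assumes "(v::real vec) \<in> carrier_vec n" and "\<And>i. i < n \<Longrightarrow> f i = v $ i"
  shows "v \<bullet> v = (\<Sum>i<n. (f i)^2)"
  using assms unfolding scalar_prod_def
  by (auto simp: atLeast0LessThan intro!: sum.cong) (simp add: power2_eq_square)

lemma rayleigh_ext:
  fixes A :: "real mat"
  assumes A: "A \<in> carrier_mat n n" and n: "n \<ge> 1"
  shows "\<exists>u\<in>carrier_vec n. u \<bullet> u = 1 \<and> (\<forall>v\<in>carrier_vec n. v \<bullet> v = 1 \<longrightarrow> v \<bullet> (A *\<^sub>v v) \<le> u \<bullet> (A *\<^sub>v u))"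
    and "\<exists>u\<in>carrier_vec n. u \<bullet> u = 1 \<and> (\<forall>v\<in>carrier_vec n. v \<bullet> v = 1 \<longrightarrow> u \<bullet> (A *\<^sub>v u) \<le> v \<bullet> (A *\<^sub>v v))"
proof -
  define S where "S = PiE (UNIV::nat set) (\<lambda>_. {-1..1::real}) \<inter> {f. (\<Sum>i<n. (f i)^2) = 1}"
  have cl: "closed {f::nat\<Rightarrow>real. (\<Sum>i<n. (f i)^2) = 1}"
    by (intro closed_Collect_eq continuous_intros continuous_on_product_coordinates) 
  have cS: "compact S" unfolding S_def by (rule compact_Int_closed[OF cpt cl])
  have "(\<lambda>i. if i = 0 then 1 else 0::real) \<in> S" unfolding S_def using n
    by (auto simp: power2_eq_square if_distrib sum.delta cong: if_cong)
  hence ne: "S \<noteq> {}" by auto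
  have ct: "continuous_on S (qf n A)" unfolding qf_def
    by (intro continuous_intros continuous_on_subset[OF continuous_on_product_coordinates]) auto
  have tovec: "\<exists>f\<in>S. qf n A f = v \<bullet> (A *\<^sub>v v)" if v: "v \<in> carrier_vec n" "v \<bullet> v = 1" for v
  proof -
    define f where "f = (\<lambda>i. if i < n then v $ i else 0)"
    have s: "(\<Sum>i<n. (f i)^2) = 1" using sq_vec[OF v(1), of f] v(2) by (simp add: f_def)
    have "f i \<in> {-1..1}" for i
    proof (cases "i < n")
      case True
      have "(f i)^2 \<le> (\<Sum>i<n. (f i)^2)" by (rule member_le_sum) (use True in auto)
      then have "(f i)^2 \<le> 1" using s by simp
      then show ?thesis by (auto simp: abs_square_le_1 abs_le_iff)
    qed (auto simp: f_def)
    then have "f \<in> S" unfolding S_def using s by auto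
    moreover have "qf n A f = v \<bullet> (A *\<^sub>v v)" using qf_vec[OF A v(1), of f] by (simp add: f_def)
    ultimately show ?thesis by blast
  qed
  have fromf: "Matrix.vec n f \<in> carrier_vec n \<and> Matrix.vec n f \<bullet> Matrix.vec n f = 1 \<and> Matrix.vec n f \<bullet> (A *\<^sub>v Matrix.vec n f) = qf n A f" if "f \<in> S" for f
    using that qf_vec[OF A, of "Matrix.vec n f" f] sq_vec[of "Matrix.vec n f" n f] unfolding S_def by auto
  obtain f1 where f1: "f1 \<in> S" "\<forall>g\<in>S. qf n A g \<le> qf n A f1"
    using continuous_attains_sup[OF cS ne ct] by blast
  obtain f2 where f2: "f2 \<in> S" "\<forall>g\<in>S. qf n A f2 \<le> qf n A g"
    using continuous_attains_inf[OF cS ne ct] by blast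
  show "\<exists>u\<in>carrier_vec n. u \<bullet> u = 1 \<and> (\<forall>v\<in>carrier_vec n. v \<bullet> v = 1 \<longrightarrow> v \<bullet> (A *\<^sub>v v) \<le> u \<bullet> (A *\<^sub>v u))"
    using fromf[OF f1(1)] f1(2) tovec by metis
  show "\<exists>u\<in>carrier_vec n. u \<bullet> u = 1 \<and> (\<forall>v\<in>carrier_vec n. v \<bullet> v = 1 \<longrightarrow> u \<bullet> (A *\<^sub>v u) \<le> v \<bullet> (A *\<^sub>v v))"
    using fromf[OF f2(1)] f2(2) tovec by metis
qed

lemma sym_form: fixes A :: "real mat"
  assumes A: "A \<in> carrier_mat n n" and s: "transpose_mat A = A"
    and x: "x \<in> carrier_vec n" and y: "y \<in> carrier_vec n"
  shows "y \<bullet> (A *\<^sub>v x) = x \<bullet> (A *\<^sub>v y)"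
proof -
  have "(transpose_mat A *\<^sub>v y) \<bullet> x = y \<bullet> (A *\<^sub>v x)"
    by (rule transpose_vec_mult_scalar[OF A x y])
  then show ?thesis using s comm_scalar_prod[OF _ x, of "A *\<^sub>v y"] A y by auto
qed

lemma sp_self_ge0: "(v::real vec) \<bullet> v \<ge> 0"
  unfolding scalar_prod_def by (auto intro!: sum_nonneg)

lemma sp_self_0: assumes "(v::real vec) \<in> carrier_vec n" "v \<bullet> v = 0" shows "v = 0\<^sub>v n"
proof (rule eq_vecI)
  fix i assume "i < dim_vec (0\<^sub>v n :: real vec)"
  then have i: "i < n" by simp
  have "(\<Sum>j\<in>{0..<n}. v $ j * v $ j) = 0" using assms unfolding scalar_prod_def by auto
  then have "\<forall>j\<in>{0..<n}. v $ j * v $ j = 0" by (subst (asm) sum_nonneg_eq_0_iff) auto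
  then show "v $ i = 0\<^sub>v n $ i" using i by auto
qed (use assms in auto)

lemma quad_lemma: fixes c K :: real
  assumes "\<And>t. 2 * t * c + t^2 * K \<le> 0" "c \<ge> 0" shows "c = 0"
proof (rule ccontr)
  assume "c \<noteq> 0" then have c: "c > 0" using assms(2) by simp
  define t where "t = c / (\<bar>K\<bar> + 1)"
  have t: "t > 0" using c by (simp add: t_def add_pos_nonneg)
  have "t * \<bar>K\<bar> < c" using c unfolding t_def by (simp add: field_simps)
  then have "t * (t * \<bar>K\<bar>) < t * c" using t by simp
  moreover have "- (t^2 * K) \<le> t * (t * \<bar>K\<bar>)"
  proof -
    have "- K \<le> \<bar>K\<bar>" by simp
    then have "t^2 * (-K) \<le> t^2 * \<bar>K\<bar>" by (rule mult_left_mono) simp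
    then show ?thesis by (simp add: power2_eq_square)
  qed
  moreover have "t * c > 0" using t c by simp
  ultimately have "2 * t * c + t^2 * K > 0" by linarith
  then show False using assms(1)[of t] by simp
qed

lemma homog_bound: fixes A :: "real mat"
  assumes A: "A \<in> carrier_mat n n" and u: "u \<in> carrier_vec n"
    and hmax: "\<forall>v\<in>carrier_vec n. v \<bullet> v = 1 \<longrightarrow> v \<bullet> (A *\<^sub>v v) \<le> u \<bullet> (A *\<^sub>v u)"
    and v: "v \<in> carrier_vec n"
  shows "v \<bullet> (A *\<^sub>v v) \<le> (u \<bullet> (A *\<^sub>v u)) * (v \<bullet> v)"
proof (cases "v \<bullet> v = 0")
  case True
  then have "v = 0\<^sub>v n" using sp_self_0 v by blast
  then show ?thesis using A by simp
next
  case False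
  define s where "s = v \<bullet> v"
  have s: "s > 0" using False sp_self_ge0[of v] unfolding s_def by linarith
  define c where "c = 1 / sqrt s"
  have cc: "c * c = 1 / s" using s unfolding c_def by (simp add: real_sqrt_mult[symmetric])
  define w where "w = c \<cdot>\<^sub>v v"
  have w: "w \<in> carrier_vec n" using v unfolding w_def by simp
  have "w \<bullet> w = c * c * s" unfolding w_def s_def using v by (simp add: mult.assoc)
  then have "w \<bullet> w = 1" using cc s by simp
  then have "w \<bullet> (A *\<^sub>v w) \<le> u \<bullet> (A *\<^sub>v u)" using hmax w by blast
  moreover have "w \<bullet> (A *\<^sub>v w) = c * c * (v \<bullet> (A *\<^sub>v v))"
    unfolding w_def using v A by (simp add: mult_mat_vec[OF A v] mult.assoc)
  ultimately have "(v \<bullet> (A *\<^sub>v v)) / s \<le> u \<bullet> (A *\<^sub>v u)" using cc by simp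
  then show ?thesis using s unfolding s_def by (simp add: divide_le_eq)
qed

lemma max_eig: fixes A :: "real mat"
  assumes A: "A \<in> carrier_mat n n" and sy: "transpose_mat A = A" and u: "u \<in> carrier_vec n"
    and u1: "u \<bullet> u = 1"
    and hmax: "\<forall>v\<in>carrier_vec n. v \<bullet> v = 1 \<longrightarrow> v \<bullet> (A *\<^sub>v v) \<le> u \<bullet> (A *\<^sub>v u)"
  shows "A *\<^sub>v u = (u \<bullet> (A *\<^sub>v u)) \<cdot>\<^sub>v u"
proof -
  define M where "M = u \<bullet> (A *\<^sub>v u)"
  define r where "r = A *\<^sub>v u - M \<cdot>\<^sub>v u"
  have r: "r \<in> carrier_vec n" unfolding r_def using A u by simp
  have Au: "A *\<^sub>v u \<in> carrier_vec n" using A u by simp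
  have Ar: "A *\<^sub>v r \<in> carrier_vec n" using A r by simp
  have key: "r \<bullet> (A *\<^sub>v u) - M * (u \<bullet> r) = r \<bullet> r"
  proof -
    have "r \<bullet> r = r \<bullet> (A *\<^sub>v u) - r \<bullet> (M \<cdot>\<^sub>v u)"
      using scalar_prod_minus_distrib[OF r Au, of "M \<cdot>\<^sub>v u"] u unfolding r_def by simp
    also have "r \<bullet> (M \<cdot>\<^sub>v u) = M * (u \<bullet> r)" using r u by (simp add: comm_scalar_prod[OF r u])
    finally show ?thesis by simp
  qed
  have ineq: "2 * t * (r \<bullet> r) + t^2 * (r \<bullet> (A *\<^sub>v r) - M * (r \<bullet> r)) \<le> 0" for t
  proof -
    define w where "w = u + t \<cdot>\<^sub>v r"
    have w: "w \<in> carrier_vec n" unfolding w_def using u r by simp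
    have hb: "w \<bullet> (A *\<^sub>v w) \<le> M * (w \<bullet> w)"
      using homog_bound[OF A u hmax w] unfolding M_def .
    have Aw: "A *\<^sub>v w = A *\<^sub>v u + t \<cdot>\<^sub>v (A *\<^sub>v r)"
      unfolding w_def using A u r by (simp add: mult_add_distrib_mat_vec mult_mat_vec)
    have e1: "w \<bullet> (A *\<^sub>v w) = M + 2 * t * (r \<bullet> (A *\<^sub>v u)) + t^2 * (r \<bullet> (A *\<^sub>v r))"
    proof -
      have "w \<bullet> (A *\<^sub>v w) = u \<bullet> (A *\<^sub>v u) + t * (u \<bullet> (A *\<^sub>v r)) + t * (r \<bullet> (A *\<^sub>v u)) + t * t * (r \<bullet> (A *\<^sub>v r))"
        unfolding Aw unfolding w_def using u r Au Ar
        by (simp add: add_scalar_prod_distrib[of _ n] scalar_prod_add_distrib[of _ n] algebra_simps)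
      moreover have "u \<bullet> (A *\<^sub>v r) = r \<bullet> (A *\<^sub>v u)" using sym_form[OF A sy r u] .
      ultimately show ?thesis unfolding M_def by (simp add: power2_eq_square algebra_simps)
    qed
    have e2: "w \<bullet> w = 1 + 2 * t * (u \<bullet> r) + t^2 * (r \<bullet> r)"
    proof -
      have "w \<bullet> w = u \<bullet> u + t * (u \<bullet> r) + t * (r \<bullet> u) + t * t * (r \<bullet> r)"
        unfolding w_def using u r
        by (simp add: add_scalar_prod_distrib[of _ n] scalar_prod_add_distrib[of _ n] algebra_simps)
      then show ?thesis using u1 comm_scalar_prod[OF r u] by (simp add: power2_eq_square algebra_simps)
    qed
    from hb e1 e2 key show ?thesis by (simp add: algebra_simps power2_eq_square)
  qed
  have "r \<bullet> r = 0" by (rule quad_lemma[OF ineq sp_self_ge0])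
  then have "r = 0\<^sub>v n" using sp_self_0 r by blast
  then show ?thesis unfolding M_def[symmetric]
    by (intro eq_vecI) (use A u in \<open>auto simp: r_def\<close>, (drule_tac f="\<lambda>x. x $ i" in arg_cong, use A u in auto)?)
qed

lemma expand_Q: fixes A :: "real mat"
  assumes A: "A \<in> carrier_mat n n" and sy: "transpose_mat A = A"
    and x: "x \<in> carrier_vec n" and y: "y \<in> carrier_vec n"
  shows "(x + y) \<bullet> (x + y) - g * ((x + y) \<bullet> (A *\<^sub>v (x + y))) =
    (x \<bullet> x - g * (x \<bullet> (A *\<^sub>v x))) + 2 * (y \<bullet> x) - 2 * g * (y \<bullet> (A *\<^sub>v x))
    + (y \<bullet> y - g * (y \<bullet> (A *\<^sub>v y)))"
proof -
  have Ax: "A *\<^sub>v x \<in> carrier_vec n" and Ay: "A *\<^sub>v y \<in> carrier_vec n" using A x y by auto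
  have "(x + y) \<bullet> (A *\<^sub>v (x + y)) = x \<bullet> (A *\<^sub>v x) + x \<bullet> (A *\<^sub>v y) + y \<bullet> (A *\<^sub>v x) + y \<bullet> (A *\<^sub>v y)"
    using A x y Ax Ay
    by (simp add: mult_add_distrib_mat_vec add_scalar_prod_distrib[of _ n] scalar_prod_add_distrib[of _ n])
  moreover have "(x + y) \<bullet> (x + y) = x \<bullet> x + 2 * (y \<bullet> x) + y \<bullet> y"
    using x y comm_scalar_prod[OF x y]
    by (simp add: add_scalar_prod_distrib[of _ n] scalar_prod_add_distrib[of _ n])
  moreover have "x \<bullet> (A *\<^sub>v y) = y \<bullet> (A *\<^sub>v x)" using sym_form[OF A sy x y] by simp
  ultimately show ?thesis by (simp add: algebra_simps)
qed

lemma contraction: fixes A :: "real mat"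
  assumes A: "A \<in> carrier_mat n n" and sy: "transpose_mat A = A" and rho: "\<rho> \<ge> 0"
    and hq: "\<forall>v\<in>carrier_vec n. \<bar>v \<bullet> v - g * (v \<bullet> (A *\<^sub>v v))\<bar> \<le> \<rho> * (v \<bullet> v)"
    and x: "x \<in> carrier_vec n"
  shows "vnorm (x - g \<cdot>\<^sub>v (A *\<^sub>v x)) \<le> \<rho> * vnorm x"
proof -
  define c where "c = x - g \<cdot>\<^sub>v (A *\<^sub>v x)"
  have Ax: "A *\<^sub>v x \<in> carrier_vec n" using A x by auto
  have c: "c \<in> carrier_vec n" unfolding c_def using Ax x by simp
  have cc: "c \<bullet> c = c \<bullet> x - g * (c \<bullet> (A *\<^sub>v x))"
    using scalar_prod_minus_distrib[OF c x, of "g \<cdot>\<^sub>v (A *\<^sub>v x)"] Ax c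
    unfolding c_def[symmetric] by simp
  have main: "4 * t * (c \<bullet> c) \<le> \<rho> * (2 * (x \<bullet> x) + 2 * t^2 * (c \<bullet> c))" for t
  proof -
    define Q where "Q = (\<lambda>z. z \<bullet> z - g * (z \<bullet> (A *\<^sub>v z)))"
    have y1: "t \<cdot>\<^sub>v c \<in> carrier_vec n" and y2: "(-t) \<cdot>\<^sub>v c \<in> carrier_vec n" using c by auto
    have mAc: "A *\<^sub>v (s \<cdot>\<^sub>v c) = s \<cdot>\<^sub>v (A *\<^sub>v c)" for s using mult_mat_vec[OF A c] .
    have Ac: "A *\<^sub>v c \<in> carrier_vec n" using A c by auto
    have Qs: "Q (s \<cdot>\<^sub>v c) = s^2 * Q c" for s
      unfolding Q_def mAc using c Ac by (simp add: power2_eq_square algebra_simps)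
    have e1: "Q (x + t \<cdot>\<^sub>v c) = Q x + 2 * t * (c \<bullet> x) - 2 * g * t * (c \<bullet> (A *\<^sub>v x)) + t^2 * Q c"
      using expand_Q[OF A sy x y1, of g] Qs[of t] c x Ax unfolding Q_def by (simp add: algebra_simps)
    have e2: "Q (x + (-t) \<cdot>\<^sub>v c) = Q x - 2 * t * (c \<bullet> x) + 2 * g * t * (c \<bullet> (A *\<^sub>v x)) + t^2 * Q c"
      using expand_Q[OF A sy x y2, of g] Qs[of "-t"] c x Ax unfolding Q_def by (simp add: algebra_simps)
    have n1: "(x + t \<cdot>\<^sub>v c) \<bullet> (x + t \<cdot>\<^sub>v c) = x \<bullet> x + 2 * t * (c \<bullet> x) + t^2 * (c \<bullet> c)"
      using expand_Q[OF A sy x y1, of 0] c x by (simp add: power2_eq_square algebra_simps)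
    have n2: "(x + (-t) \<cdot>\<^sub>v c) \<bullet> (x + (-t) \<cdot>\<^sub>v c) = x \<bullet> x - 2 * t * (c \<bullet> x) + t^2 * (c \<bullet> c)"
      using expand_Q[OF A sy x y2, of 0] c x by (simp add: power2_eq_square algebra_simps)
    have b1: "Q (x + t \<cdot>\<^sub>v c) \<le> \<rho> * ((x + t \<cdot>\<^sub>v c) \<bullet> (x + t \<cdot>\<^sub>v c))"
      using hq[rule_format, of "x + t \<cdot>\<^sub>v c"] x y1 unfolding Q_def by auto
    have b2: "- Q (x + (-t) \<cdot>\<^sub>v c) \<le> \<rho> * ((x + (-t) \<cdot>\<^sub>v c) \<bullet> (x + (-t) \<cdot>\<^sub>v c))"
      using hq[rule_format, of "x + (-t) \<cdot>\<^sub>v c"] x y2 unfolding Q_def by auto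
    have d: "Q (x + t \<cdot>\<^sub>v c) - Q (x + (-t) \<cdot>\<^sub>v c) = 4 * t * (c \<bullet> x - g * (c \<bullet> (A *\<^sub>v x)))"
      using e1 e2 by (simp add: algebra_simps)
    have sm: "(x + t \<cdot>\<^sub>v c) \<bullet> (x + t \<cdot>\<^sub>v c) + (x + (-t) \<cdot>\<^sub>v c) \<bullet> (x + (-t) \<cdot>\<^sub>v c)
       = 2 * (x \<bullet> x) + 2 * t^2 * (c \<bullet> c)" using n1 n2 by simp
    have "Q (x + t \<cdot>\<^sub>v c) - Q (x + (-t) \<cdot>\<^sub>v c) \<le> \<rho> * ((x + t \<cdot>\<^sub>v c) \<bullet> (x + t \<cdot>\<^sub>v c) + (x + (-t) \<cdot>\<^sub>v c) \<bullet> (x + (-t) \<cdot>\<^sub>v c))"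
      using b1 b2 by (simp add: distrib_left)
    then show ?thesis unfolding d sm cc[symmetric] .
  qed
  have sq: "c \<bullet> c \<le> \<rho>^2 * (x \<bullet> x)"
  proof (cases "\<rho> = 0")
    case True
    then have "4 * (c \<bullet> c) \<le> 0" using main[of 1] by simp
    then show ?thesis using sp_self_ge0[of c] True by simp
  next
    case False
    then have r: "\<rho> > 0" using rho by simp
    have "4 * (1/\<rho>) * (c \<bullet> c) \<le> \<rho> * (2 * (x \<bullet> x) + 2 * (1/\<rho>)^2 * (c \<bullet> c))" by (rule main)
    then have "4 * (c \<bullet> c) \<le> \<rho> * \<rho> * (2 * (x \<bullet> x)) + 2 * (c \<bullet> c)"
      using r by (simp add: field_simps power2_eq_square)
    then show ?thesis by (simp add: power2_eq_square)
  qed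
  have "sqrt (c \<bullet> c) \<le> sqrt (\<rho>^2 * (x \<bullet> x))" using sq by simp
  also have "\<dots> = \<rho> * sqrt (x \<bullet> x)" using rho by (simp add: real_sqrt_mult)
  finally show ?thesis unfolding vnorm_def c_def .
qed

definition WQn :: "nat \<Rightarrow> real mat" where
  "WQn n = Matrix.mat (2*n+1) (n+1) (\<lambda>(i,j). if (i < n \<and> j = i) \<or> (i = 2*n \<and> j = n) then 1 else 0)"

definition WVn :: "nat \<Rightarrow> real mat" where
  "WVn n = Matrix.mat (2*n+1) n (\<lambda>(i,j). if i = n + j then 1 else 0)"

lemma rmul_WQ: assumes z: "z \<in> carrier_vec (2*n+1)"
  shows "rmul z (WQn n) = Matrix.vec (n+1) (\<lambda>k. if k < n then z $ k else z $ (2*n))"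
proof (rule eq_vecI)
  show "dim_vec (rmul z (WQn n)) = dim_vec (Matrix.vec (n+1) (\<lambda>k. if k < n then z $ k else z $ (2*n)))"
    unfolding rmul_def WQn_def by simp
  fix k assume "k < dim_vec (Matrix.vec (n+1) (\<lambda>k. if k < n then z $ k else z $ (2*n)))"
  then have k: "k < n + 1" by simp
  define p where "p = (if k < n then k else 2*n)"
  have p: "p < 2*n+1" unfolding p_def by auto
  have "rmul z (WQn n) $ k = (\<Sum>i\<in>{0..<2*n+1}. WQn n $$ (i,k) * z $ i)"
    unfolding rmul_def using k z by (simp add: WQn_def scalar_prod_def)
  also have "\<dots> = (\<Sum>i\<in>{0..<2*n+1}. if i = p then z $ i else 0)"
    by (rule sum.cong) (use k in \<open>auto simp: WQn_def p_def\<close>)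
  also have "\<dots> = z $ p" using p by simp
  finally show "rmul z (WQn n) $ k = Matrix.vec (n+1) (\<lambda>k. if k < n then z $ k else z $ (2*n)) $ k"
    using k by (simp add: p_def)
qed

lemma rmul_WV: assumes z: "z \<in> carrier_vec (2*n+1)"
  shows "rmul z (WVn n) = Matrix.vec n (\<lambda>k. z $ (n + k))"
proof (rule eq_vecI)
  show "dim_vec (rmul z (WVn n)) = dim_vec (Matrix.vec n (\<lambda>k. z $ (n + k)))"
    unfolding rmul_def WVn_def by simp
  fix k assume "k < dim_vec (Matrix.vec n (\<lambda>k. z $ (n + k)))"
  then have k: "k < n" by simp
  have "rmul z (WVn n) $ k = (\<Sum>i\<in>{0..<2*n+1}. WVn n $$ (i,k) * z $ i)"
    unfolding rmul_def using k z by (simp add: WVn_def scalar_prod_def)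
  also have "\<dots> = (\<Sum>i\<in>{0..<2*n+1}. if i = n + k then z $ i else 0)"
    by (rule sum.cong) (use k in \<open>auto simp: WVn_def\<close>)
  also have "\<dots> = z $ (n + k)" using k by simp
  finally show "rmul z (WVn n) $ k = Matrix.vec n (\<lambda>k. z $ (n + k)) $ k"
    using k by simp
qed

lemma tok_a_idx: assumes A: "A \<in> carrier_mat n n" and i: "i < n" and j: "j < 2*n+1"
  shows "tok_a n A i $ j = (if j < n then A $$ (i,j) else if j < 2*n then (if j - n = i then 1 else 0) else 0)"
  using A i j unfolding tok_a_def by auto

lemma tok_b_idx: assumes b: "b \<in> carrier_vec n" and j: "j < 2*n+1"
  shows "tok_b n b $ j = (if j < n then 0 else if j < 2*n then b $ (j - n) else 1)"
  using b j unfolding tok_b_def by auto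

lemma tok_x_idx: assumes x: "x \<in> carrier_vec n" and j: "j < 2*n+1"
  shows "tok_x n x $ j = (if j < n then x $ j else if j < 2*n then 0 else 1)"
  using x j unfolding tok_x_def by auto

lemma tok_carrier: assumes A: "A \<in> carrier_mat n n" "b \<in> carrier_vec n" "x \<in> carrier_vec n"
  shows "tok_a n A i \<in> carrier_vec (2*n+1)" "tok_b n b \<in> carrier_vec (2*n+1)" "tok_x n x \<in> carrier_vec (2*n+1)"
  using assms unfolding tok_a_def tok_b_def tok_x_def carrier_vec_def by auto

lemma head_lemma: assumes A: "A \<in> carrier_mat n n" and b: "b \<in> carrier_vec n" and x: "x \<in> carrier_vec n"
  shows "head_x n (WQn n) (WQn n) (WVn n) A b x = A *\<^sub>v x + b"
proof -
  note tc = tok_carrier[OF A b x]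
  define q where "q = Matrix.vec (n+1) (\<lambda>k. if k < n then x $ k else (1::real))"
  have hq: "rmul (tokens n A b x (n+1)) (WQn n) = q"
    unfolding q_def tokens_def using tc x by (auto simp: rmul_WQ tok_x_idx intro!: eq_vecI)
  have hk: "rmul (tokens n A b x i) (WQn n) = Matrix.vec (n+1) (\<lambda>k. if k < n then A $$ (i,k) else 0)" if i: "i < n" for i
    unfolding tokens_def using tc i A b x by (auto simp: rmul_WQ tok_a_idx intro!: eq_vecI)
  have hkn: "rmul (tokens n A b x n) (WQn n) = Matrix.vec (n+1) (\<lambda>k. if k < n then 0 else 1)"
    unfolding tokens_def using tc A b x by (auto simp: rmul_WQ tok_b_idx intro!: eq_vecI)
  have hv: "rmul (tokens n A b x i) (WVn n) = Matrix.vec n (\<lambda>k. if k = i then 1 else 0)" if i: "i < n" for i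
    unfolding tokens_def using tc i A b x by (auto simp: rmul_WV tok_a_idx intro!: eq_vecI)
  have hvn: "rmul (tokens n A b x n) (WVn n) = b"
    unfolding tokens_def using tc A b x by (auto simp: rmul_WV tok_b_idx intro!: eq_vecI)
  have hvx: "rmul (tokens n A b x (n+1)) (WVn n) = 0\<^sub>v n"
    unfolding tokens_def using tc A b x by (auto simp: rmul_WV tok_x_idx intro!: eq_vecI)
  have qk: "q \<bullet> Matrix.vec (n+1) (\<lambda>k. if k < n then A $$ (i,k) else 0) = (A *\<^sub>v x) $ i" if i: "i < n" for i
  proof -
    have "q \<bullet> Matrix.vec (n+1) (\<lambda>k. if k < n then A $$ (i,k) else 0)
        = (\<Sum>k\<in>{0..<Suc n}. (if k < n then x $ k else 1) * (if k < n then A $$ (i,k) else 0))"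
      unfolding q_def scalar_prod_def by simp
    also have "\<dots> = (\<Sum>k\<in>{0..<n}. x $ k * A $$ (i,k))" by simp
    also have "\<dots> = row A i \<bullet> x" unfolding scalar_prod_def using A x i
      by (auto intro!: sum.cong)
    finally show ?thesis using A i by simp
  qed
  have qn: "q \<bullet> Matrix.vec (n+1) (\<lambda>k. if k < n then 0 else 1) = 1"
  proof -
    have "q \<bullet> Matrix.vec (n+1) (\<lambda>k. if k < n then 0 else 1)
        = (\<Sum>k\<in>{0..<Suc n}. (if k < n then x $ k else 1) * (if k < n then 0 else (1::real)))"
      unfolding q_def scalar_prod_def by simp
    also have "\<dots> = 1" by simp
    finally show ?thesis .
  qed
  show ?thesis
  proof (rule eq_vecI)
    show "dim_vec (head_x n (WQn n) (WQn n) (WVn n) A b x) = dim_vec (A *\<^sub>v x + b)"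
      unfolding head_x_def lin_attn_def using A b by (simp add: WVn_def)
    fix k assume "k < dim_vec (A *\<^sub>v x + b)"
    then have k: "k < n" using A b by simp
    define F where "F = (\<lambda>i. (rmul (tokens n A b x (n+1)) (WQn n) \<bullet> rmul (tokens n A b x i) (WQn n)) * (rmul (tokens n A b x i) (WVn n) $ k))"
    have "head_x n (WQn n) (WQn n) (WVn n) A b x $ k = (\<Sum>i<n+2. F i)"
      unfolding head_x_def lin_attn_def F_def using k by (simp add: WVn_def)
    also have "\<dots> = (\<Sum>i<n. F i) + F n + F (n+1)" by (simp add: numeral_2_eq_2)
    also have "(\<Sum>i<n. F i) = (\<Sum>i<n. if i = k then (A *\<^sub>v x) $ i else 0)"
      unfolding F_def hq by (rule sum.cong) (auto simp: hk hv qk[simplified] k)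
    also have "\<dots> = (A *\<^sub>v x) $ k" using k by simp
    also have "F n = b $ k" unfolding F_def hq hkn qn hvn by simp
    also have "F (n+1) = 0" unfolding F_def hvx using k by simp
    finally show "head_x n (WQn n) (WQn n) (WVn n) A b x $ k = (A *\<^sub>v x + b) $ k"
      using k A b by simp
  qed
qed

lemma smult_one_mv: assumes v: "(v::real vec) \<in> carrier_vec n" and i: "i < n"
  shows "((c \<cdot>\<^sub>m 1\<^sub>m n) *\<^sub>v v) $ i = c * v $ i"
  using v i by simp

lemma step_lemma: assumes A: "A \<in> carrier_mat n n" and b: "b \<in> carrier_vec n" and x: "x \<in> carrier_vec n"
  shows "layer_step n (WQn n) (WQn n) (WVn n) g A b x = x - g \<cdot>\<^sub>v (A *\<^sub>v x + b)"
proof -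
  have o: "A *\<^sub>v x + b \<in> carrier_vec n" using A b x by simp
  have tx: "tok_x n x \<in> carrier_vec (2*n+1)" using tok_carrier[OF A b x] by simp
  have dz: "dim_vec (tok_x n x) = 2*n+1" using tx by simp
  show ?thesis
    unfolding layer_step_def head_lemma[OF A b x]
  proof (rule eq_vecI)
    fix i assume "i < dim_vec (x - g \<cdot>\<^sub>v (A *\<^sub>v x + b))"
    then have i: "i < n" using x b by simp
    have "vec_first (residual n ((- g) \<cdot>\<^sub>m 1\<^sub>m n) (A *\<^sub>v x + b) (tok_x n x)) n $ i
       = tok_x n x $ i + (((- g) \<cdot>\<^sub>m 1\<^sub>m n) *\<^sub>v (A *\<^sub>v x + b)) $ i"
      unfolding vec_first_def residual_def using i dz by simp
    also have "\<dots> = x $ i + (-g) * (A *\<^sub>v x + b) $ i"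
      using smult_one_mv[OF o i, of "-g"] tok_x_idx[OF x, of i] i by simp
    finally show "vec_first (residual n ((- g) \<cdot>\<^sub>m 1\<^sub>m n) (A *\<^sub>v x + b) (tok_x n x)) n $ i
       = (x - g \<cdot>\<^sub>v (A *\<^sub>v x + b)) $ i" using i x o b by (subst index_minus_vec) (auto simp: carrier_vecD)
  qed (use x o b in simp)
qed

lemma homog_bound_min: fixes A :: "real mat"
  assumes A: "A \<in> carrier_mat n n" and u: "u \<in> carrier_vec n"
    and hmin: "\<forall>v\<in>carrier_vec n. v \<bullet> v = 1 \<longrightarrow> u \<bullet> (A *\<^sub>v u) \<le> v \<bullet> (A *\<^sub>v v)"
    and v: "v \<in> carrier_vec n"
  shows "(u \<bullet> (A *\<^sub>v u)) * (v \<bullet> v) \<le> v \<bullet> (A *\<^sub>v v)"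
proof (cases "v \<bullet> v = 0")
  case True
  then have "v = 0\<^sub>v n" using sp_self_0 v by blast
  then show ?thesis using A by simp
next
  case False
  define s where "s = v \<bullet> v"
  have s: "s > 0" using False sp_self_ge0[of v] unfolding s_def by linarith
  define c where "c = 1 / sqrt s"
  have cc: "c * c = 1 / s" using s unfolding c_def by (simp add: real_sqrt_mult[symmetric])
  define w where "w = c \<cdot>\<^sub>v v"
  have w: "w \<in> carrier_vec n" using v unfolding w_def by simp
  have "w \<bullet> w = c * c * s" unfolding w_def s_def using v by (simp add: mult.assoc)
  then have "w \<bullet> w = 1" using cc s by simp
  then have "u \<bullet> (A *\<^sub>v u) \<le> w \<bullet> (A *\<^sub>v w)" using hmin w by blast
  moreover have "w \<bullet> (A *\<^sub>v w) = c * c * (v \<bullet> (A *\<^sub>v v))"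
    unfolding w_def using v A by (simp add: mult_mat_vec[OF A v] mult.assoc)
  ultimately have "u \<bullet> (A *\<^sub>v u) \<le> (v \<bullet> (A *\<^sub>v v)) / s" using cc by simp
  then show ?thesis using s unfolding s_def by (simp add: le_divide_eq)
qed

lemma spd_inv: assumes sp: "spd_mat n A" and b: "b \<in> carrier_vec n"
  shows "mat_inv A *\<^sub>v b \<in> carrier_vec n" "A *\<^sub>v (mat_inv A *\<^sub>v b) = b"
proof -
  have A: "A \<in> carrier_mat n n" and pd: "\<forall>v\<in>carrier_vec n. v \<noteq> 0\<^sub>v n \<longrightarrow> v \<bullet> (A *\<^sub>v v) > 0"
    using sp unfolding spd_mat_def by auto
  have "det A \<noteq> 0"
  proof
    assume "det A = 0"
    then obtain v where v: "v \<in> carrier_vec n" "v \<noteq> 0\<^sub>v n" "A *\<^sub>v v = 0\<^sub>v n"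
      using det_0_iff_vec_prod_zero[OF A] by auto
    then have "v \<bullet> (A *\<^sub>v v) > 0" using pd by auto
    then show False using v by simp
  qed
  from det_non_zero_imp_unit[OF A this, unfolded Units_def, of "()"]
  obtain B where B: "B \<in> carrier_mat n n" and BA: "B * A = 1\<^sub>m n" and AB: "A * B = 1\<^sub>m n"
    by (auto simp: ring_mat_def)
  have ex: "\<exists>B. inverts_mat A B \<and> inverts_mat B A"
    using B BA AB A unfolding inverts_mat_def by auto
  define C where "C = mat_inv A"
  have C: "inverts_mat A C \<and> inverts_mat C A" unfolding C_def mat_inv_def by (rule someI_ex[OF ex])
  then have AC: "A * C = 1\<^sub>m n" and CA: "C * A = 1\<^sub>m (dim_row C)" using A unfolding inverts_mat_def by auto
  have "dim_col C = n" using arg_cong[OF AC, of dim_col] by simp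
  moreover have "dim_row C = n" using arg_cong[OF CA, of dim_col] A by simp
  ultimately have Cc: "C \<in> carrier_mat n n" by auto
  show "mat_inv A *\<^sub>v b \<in> carrier_vec n" unfolding C_def[symmetric] using Cc b by simp
  have "A *\<^sub>v (C *\<^sub>v b) = (A * C) *\<^sub>v b" using assoc_mult_mat_vec[OF A Cc b] by simp
  also have "\<dots> = b" using AC b by simp
  finally show "A *\<^sub>v (mat_inv A *\<^sub>v b) = b" unfolding C_def .
qed

lemma minimizer: fixes A :: "real mat"
  assumes sp: "spd_mat n A" and b: "b \<in> carrier_vec n" and xs: "xs \<in> carrier_vec n"
    and hx: "A *\<^sub>v xs = - b" and y: "y \<in> carrier_vec n" and ne: "y \<noteq> xs"
  shows "quad_obj A b xs < quad_obj A b y"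
proof -
  have A: "A \<in> carrier_mat n n" and sy: "transpose_mat A = A"
    and pd: "\<forall>v\<in>carrier_vec n. v \<noteq> 0\<^sub>v n \<longrightarrow> v \<bullet> (A *\<^sub>v v) > 0"
    using sp unfolding spd_mat_def by auto
  define d where "d = y - xs"
  have d: "d \<in> carrier_vec n" unfolding d_def using y xs by simp
  have yd: "y = xs + d" unfolding d_def using y xs by (intro eq_vecI) auto
  have d0: "d \<noteq> 0\<^sub>v n" using ne yd xs by auto
  have pos: "d \<bullet> (A *\<^sub>v d) > 0" using pd d d0 by auto
  note e0 = expand_Q[OF A sy xs d, of 0]
  note e1 = expand_Q[OF A sy xs d, of 1]
  have ex: "(xs + d) \<bullet> (A *\<^sub>v (xs + d)) = xs \<bullet> (A *\<^sub>v xs) + 2 * (d \<bullet> (A *\<^sub>v xs)) + d \<bullet> (A *\<^sub>v d)"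
    using e0 e1 by simp
  have "d \<bullet> (A *\<^sub>v xs) = - (b \<bullet> d)" unfolding hx using d b comm_scalar_prod[OF b d] by simp
  moreover have "b \<bullet> (xs + d) = b \<bullet> xs + b \<bullet> d" using scalar_prod_add_distrib[OF b xs d] .
  ultimately have "quad_obj A b y = quad_obj A b xs + 1/2 * (d \<bullet> (A *\<^sub>v d))"
    unfolding quad_obj_def yd ex by (simp add: algebra_simps)
  then show ?thesis using pos by simp
qed

lemma mv_uminus: assumes A: "(A::real mat) \<in> carrier_mat n n" and w: "w \<in> carrier_vec n"
  shows "A *\<^sub>v (- w) = - (A *\<^sub>v w)"
  using A w by (intro eq_vecI) auto

lemma iter_diff: assumes A: "(A::real mat) \<in> carrier_mat n n" and b: "b \<in> carrier_vec n"
  and xs: "xs \<in> carrier_vec n" and hx: "A *\<^sub>v xs = - b" and z: "z \<in> carrier_vec n"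
  shows "(z - g \<cdot>\<^sub>v (A *\<^sub>v z + b)) - xs = (z - xs) - g \<cdot>\<^sub>v (A *\<^sub>v (z - xs))"
proof -
  have "A *\<^sub>v (z - xs) = A *\<^sub>v z - A *\<^sub>v xs" using mult_minus_distrib_mat_vec[OF A z xs] .
  also have "\<dots> = A *\<^sub>v z + b" unfolding hx using A z b by (intro eq_vecI) auto
  finally have e: "A *\<^sub>v (z - xs) = A *\<^sub>v z + b" .
  show ?thesis unfolding e using A z b xs by (intro eq_vecI) auto
qed

lemma main_part:
  assumes n: "n \<ge> 1" and sp: "spd_mat n A" and b: "b \<in> carrier_vec n"
  shows "(\<forall>x \<in> carrier_vec n. head_x n (WQn n) (WQn n) (WVn n) A b x = A *\<^sub>v x + b) \<and>
       (\<forall>\<gamma>>0. \<forall>x \<in> carrier_vec n.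
          layer_step n (WQn n) (WQn n) (WVn n) \<gamma> A b x = x - \<gamma> \<cdot>\<^sub>v (A *\<^sub>v x + b)) \<and>
       (\<forall>\<gamma>. 0 < \<gamma> \<and> \<gamma> < 2 / lambda_max A \<longrightarrow>
          (let xs = - (mat_inv A *\<^sub>v b) in
            (\<forall>y \<in> carrier_vec n. y \<noteq> xs \<longrightarrow> quad_obj A b xs < quad_obj A b y) \<and>
            (\<exists>\<rho>. 0 \<le> \<rho> \<and> \<rho> < 1 \<and>
               (\<forall>x0 \<in> carrier_vec n. \<forall>k.
                  vnorm (layer_iter n (WQn n) (WQn n) (WVn n) \<gamma> A b x0 k - xs) \<le> \<rho> ^ k * vnorm (x0 - xs)))))"
proof -
  have A: "A \<in> carrier_mat n n" and sy: "transpose_mat A = A"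
    and pd: "\<forall>v\<in>carrier_vec n. v \<noteq> 0\<^sub>v n \<longrightarrow> v \<bullet> (A *\<^sub>v v) > 0"
    using sp unfolding spd_mat_def by auto
  have P1: "\<forall>x \<in> carrier_vec n. head_x n (WQn n) (WQn n) (WVn n) A b x = A *\<^sub>v x + b"
    using head_lemma[OF A b] by blast
  have P2: "\<forall>g. \<forall>x \<in> carrier_vec n.
          layer_step n (WQn n) (WQn n) (WVn n) g A b x = x - g \<cdot>\<^sub>v (A *\<^sub>v x + b)"
    using step_lemma[OF A b] by blast
  have P3: "(let xs = - (mat_inv A *\<^sub>v b) in
            (\<forall>y \<in> carrier_vec n. y \<noteq> xs \<longrightarrow> quad_obj A b xs < quad_obj A b y) \<and>
            (\<exists>\<rho>. 0 \<le> \<rho> \<and> \<rho> < 1 \<and>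
               (\<forall>x0 \<in> carrier_vec n. \<forall>k.
                  vnorm (layer_iter n (WQn n) (WQn n) (WVn n) g A b x0 k - xs) \<le> \<rho> ^ k * vnorm (x0 - xs))))"
    if g: "0 < g" "g < 2 / lambda_max A" for g
  proof -
    define xs where "xs = - (mat_inv A *\<^sub>v b)"
    have ci: "mat_inv A *\<^sub>v b \<in> carrier_vec n" and ai: "A *\<^sub>v (mat_inv A *\<^sub>v b) = b"
      using spd_inv[OF sp b] by auto
    have xs: "xs \<in> carrier_vec n" unfolding xs_def using ci by simp
    have hx: "A *\<^sub>v xs = - b" unfolding xs_def mv_uminus[OF A ci] ai ..
    have Q1: "\<forall>y \<in> carrier_vec n. y \<noteq> xs \<longrightarrow> quad_obj A b xs < quad_obj A b y"
      using minimizer[OF sp b xs hx] by blast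
    obtain u1 where u1: "u1 \<in> carrier_vec n" "u1 \<bullet> u1 = 1"
      and hmax: "\<forall>v\<in>carrier_vec n. v \<bullet> v = 1 \<longrightarrow> v \<bullet> (A *\<^sub>v v) \<le> u1 \<bullet> (A *\<^sub>v u1)"
      using rayleigh_ext(1)[OF A n] by blast
    obtain u2 where u2: "u2 \<in> carrier_vec n" "u2 \<bullet> u2 = 1"
      and hmin: "\<forall>v\<in>carrier_vec n. v \<bullet> v = 1 \<longrightarrow> u2 \<bullet> (A *\<^sub>v u2) \<le> v \<bullet> (A *\<^sub>v v)"
      using rayleigh_ext(2)[OF A n] by blast
    define M where "M = u1 \<bullet> (A *\<^sub>v u1)"
    define m where "m = u2 \<bullet> (A *\<^sub>v u2)"
    have u2ne: "u2 \<noteq> 0\<^sub>v n" using u2 by auto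
    have u1ne: "u1 \<noteq> 0\<^sub>v n" using u1 by auto
    have m0: "m > 0" unfolding m_def using pd u2 u2ne by auto
    have mM: "m \<le> M" unfolding m_def M_def using hmax u2 by auto
    have eig: "A *\<^sub>v u1 = M \<cdot>\<^sub>v u1" unfolding M_def by (rule max_eig[OF A sy u1 hmax])
    have "eigenvalue A M" unfolding eigenvalue_def eigenvector_def
      using eig u1 u1ne A by auto
    moreover have "finite {l. eigenvalue A l}"
      using card_finite_spectrum(1)[OF A] unfolding spectrum_def .
    ultimately have hML: "M \<le> lambda_max A" unfolding lambda_max_def by (simp add: Max_ge)
    have L0: "lambda_max A > 0" using hML mM m0 by linarith
    have gL: "g * lambda_max A < 2" using g L0 by (simp add: less_divide_eq)
    have gM: "g * M < 2" using gL hML g(1) by (smt (verit) mult_left_mono)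
    have gm: "g * m > 0" using g m0 by simp
    have gmM: "g * m \<le> g * M" using mM g by simp
    define \<rho> where "\<rho> = max \<bar>1 - g * M\<bar> \<bar>1 - g * m\<bar>"
    have r0: "\<rho> \<ge> 0" unfolding \<rho>_def by simp
    have r1: "\<rho> < 1" unfolding \<rho>_def using gM gm gmM by (simp add: abs_less_iff)
    have hq: "\<forall>v\<in>carrier_vec n. \<bar>v \<bullet> v - g * (v \<bullet> (A *\<^sub>v v))\<bar> \<le> \<rho> * (v \<bullet> v)"
    proof
      fix v :: "real vec" assume v: "v \<in> carrier_vec n"
      define s where "s = v \<bullet> v"
      define qv where "qv = v \<bullet> (A *\<^sub>v v)"
      have s0: "s \<ge> 0" unfolding s_def by (rule sp_self_ge0)
      have lo: "m * s \<le> qv" unfolding m_def s_def qv_def by (rule homog_bound_min[OF A u2(1) hmin v])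
      have hi: "qv \<le> M * s" unfolding M_def s_def qv_def by (rule homog_bound[OF A u1(1) hmax v])
      have a1: "g * (m * s) \<le> g * qv" using lo g by simp
      have a2: "g * qv \<le> g * (M * s)" using hi g by simp
      have b1: "(1 - g * m) * s \<le> \<rho> * s" by (rule mult_right_mono) (use s0 in \<open>auto simp: \<rho>_def\<close>)
      have b2: "(- \<rho>) * s \<le> (1 - g * M) * s" by (rule mult_right_mono) (use s0 in \<open>auto simp: \<rho>_def\<close>)
      have "\<bar>s - g * qv\<bar> \<le> \<rho> * s"
        using a1 a2 b1 b2 by (simp add: abs_le_iff algebra_simps)
      then show "\<bar>v \<bullet> v - g * (v \<bullet> (A *\<^sub>v v))\<bar> \<le> \<rho> * (v \<bullet> v)" unfolding s_def qv_def .
    qed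
    have it: "layer_iter n (WQn n) (WQn n) (WVn n) g A b x0 k \<in> carrier_vec n \<and>
       vnorm (layer_iter n (WQn n) (WQn n) (WVn n) g A b x0 k - xs) \<le> \<rho> ^ k * vnorm (x0 - xs)"
      if x0: "x0 \<in> carrier_vec n" for x0 k
    proof (induction k)
      case 0
      then show ?case using x0 unfolding layer_iter_def by simp
    next
      case (Suc k)
      define z where "z = layer_iter n (WQn n) (WQn n) (WVn n) g A b x0 k"
      have z: "z \<in> carrier_vec n" and IH: "vnorm (z - xs) \<le> \<rho> ^ k * vnorm (x0 - xs)"
        using Suc unfolding z_def by auto
      have nx: "layer_iter n (WQn n) (WQn n) (WVn n) g A b x0 (Suc k) = z - g \<cdot>\<^sub>v (A *\<^sub>v z + b)"
        unfolding z_def layer_iter_def using step_lemma[OF A b] z[unfolded z_def layer_iter_def] by simp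
      have cz: "z - g \<cdot>\<^sub>v (A *\<^sub>v z + b) \<in> carrier_vec n" using z A b by simp
      have w: "z - xs \<in> carrier_vec n" using z xs by simp
      have "vnorm (z - g \<cdot>\<^sub>v (A *\<^sub>v z + b) - xs) = vnorm ((z - xs) - g \<cdot>\<^sub>v (A *\<^sub>v (z - xs)))"
        using iter_diff[OF A b xs hx z] by simp
      also have "\<dots> \<le> \<rho> * vnorm (z - xs)" by (rule contraction[OF A sy r0 hq w])
      also have "\<dots> \<le> \<rho> * (\<rho> ^ k * vnorm (x0 - xs))" by (rule mult_left_mono[OF IH r0])
      finally show ?case unfolding nx using cz by simp
    qed
    have Q2: "\<exists>\<rho>. 0 \<le> \<rho> \<and> \<rho> < 1 \<and>
               (\<forall>x0 \<in> carrier_vec n. \<forall>k.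
                  vnorm (layer_iter n (WQn n) (WQn n) (WVn n) g A b x0 k - xs) \<le> \<rho> ^ k * vnorm (x0 - xs))"
      using r0 r1 it by blast
    show ?thesis unfolding Let_def xs_def[symmetric] using Q1 Q2 by blast
  qed
  show ?thesis using P1 P2 P3 by blast
qed



theorem proposition1:
  fixes n :: nat
  assumes "n \<ge> 1"
  shows "\<exists>WQ WK WV.
    WQ \<in> carrier_mat (2*n+1) (n+1) \<and> WK \<in> carrier_mat (2*n+1) (n+1) \<and>
    WV \<in> carrier_mat (2*n+1) n \<and>
    (\<forall>A b. spd_mat n A \<and> b \<in> carrier_vec n \<longrightarrow>
       (\<forall>x \<in> carrier_vec n. head_x n WQ WK WV A b x = A *\<^sub>v x + b) \<and>
       (\<forall>\<gamma>>0. \<forall>x \<in> carrier_vec n.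
          layer_step n WQ WK WV \<gamma> A b x = x - \<gamma> \<cdot>\<^sub>v (A *\<^sub>v x + b)) \<and>
       (\<forall>\<gamma>. 0 < \<gamma> \<and> \<gamma> < 2 / lambda_max A \<longrightarrow>
          (let xs = - (mat_inv A *\<^sub>v b) in
            (\<forall>y \<in> carrier_vec n. y \<noteq> xs \<longrightarrow> quad_obj A b xs < quad_obj A b y) \<and>
            (\<exists>\<rho>. 0 \<le> \<rho> \<and> \<rho> < 1 \<and>
               (\<forall>x0 \<in> carrier_vec n. \<forall>k.
                  vnorm (layer_iter n WQ WK WV \<gamma> A b x0 k - xs) \<le> \<rho> ^ k * vnorm (x0 - xs))))))"
proof -
  have c1: "WQn n \<in> carrier_mat (2*n+1) (n+1)" by (simp add: WQn_def)
  have c2: "WVn n \<in> carrier_mat (2*n+1) n" by (simp add: WVn_def)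
  show ?thesis
    using c1 c2 main_part[OF assms] by blast
qed

end
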